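(* Let $\tau$ be a Young diagram, $l>0$ an integer, $s\in C_\tau$, and $\mu=\Gamma(\tau,s,l)$. Then $|\mu|-|\tau|>0$ and $s=\frac{f(\mu)-f(\tau)}{|\mu|-|\tau|}$.
   Context: For a Young diagram $\lambda$, $|\lambda|$ is its number of cells, $\lambda'_j$ the length of its $j$-th column ($0$ if there is none), $ct(\lambda)=\sum_{(i,j)\in\lambda}(j-i)$, and $f(\lambda)=\frac{|\lambda|^2-|\lambda|}{2}+ct(\lambda)$. $C_\tau=\{|\tau|-1+j-\tau'_j: j\ge1\}$; for $s\in C_\tau$, $j_s$ is the unique $j\ge1$ with $s=|\tau|-1+j-\tau'_j$. $\mathbf{core}_{(\nu-s)}(\tau)$ is the diagram $\eta$ with $\eta'_j=\tau'_j+1$ for $1\le j<j_s$ and $\eta'_j=\tau'_{j+1}$ for $j\ge j_s$. For a diagram $\eta$ and integer $l\ge0$, $\mathbf{rec}(l,\eta)$ is the diagram $\lambda$ defined by taking $k\ge1$ with $\eta'_{k-1}\ge l+1>\eta'_k$ ($\eta'_0:=\infty$) and setting $\lambda'_j=\eta'_j-1$ for $j<k$, $\lambda'_k=l$, $\lambda'_j=\eta'_{j-1}$ for $j>k$. For $l\ge-\tau'_{j_s}$, $\Gamma(\tau,s,l):=\mathbf{rec}(\tau'_{j_s}+l,\mathbf{core}_{(\nu-s)}(\tau))$. *)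

theory Defs
  imports Complex_Main
begin

text \<open>A Young diagram is represented by its column lengths: c j is the length of the
  j-th column for j \<ge> 1 (the value at 0 is ignored). Column lengths are weakly
  decreasing and eventually zero.\<close>

definition young :: "(nat \<Rightarrow> nat) \<Rightarrow> bool" where
  "young c \<longleftrightarrow> (\<forall>j\<ge>1. c (Suc j) \<le> c j) \<and> (\<exists>N. \<forall>j>N. c j = 0)"

definition cells :: "(nat \<Rightarrow> nat) \<Rightarrow> (nat \<times> nat) set" where
  "cells c = {(i, j). 1 \<le> j \<and> 1 \<le> i \<and> i \<le> c j}"

definition ysize :: "(nat \<Rightarrow> nat) \<Rightarrow> nat" where
  "ysize c = card (cells c)"

definition content :: "(nat \<Rightarrow> nat) \<Rightarrow> int" where
  "content c = (\<Sum>(i, j)\<in>cells c. int j - int i)"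

definition fval :: "(nat \<Rightarrow> nat) \<Rightarrow> int" where
  "fval c = (int (ysize c) ^ 2 - int (ysize c)) div 2 + content c"

definition Cset :: "(nat \<Rightarrow> nat) \<Rightarrow> int set" where
  "Cset c = {int (ysize c) - 1 + int j - int (c j) | j. j \<ge> 1}"

definition jidx :: "(nat \<Rightarrow> nat) \<Rightarrow> int \<Rightarrow> nat" where
  "jidx c s = (THE j. j \<ge> 1 \<and> s = int (ysize c) - 1 + int j - int (c j))"

definition core :: "(nat \<Rightarrow> nat) \<Rightarrow> int \<Rightarrow> (nat \<Rightarrow> nat)" where
  "core c s = (\<lambda>j. if j = 0 then 0
                   else if j < jidx c s then c j + 1
                   else c (Suc j))"

text \<open>rec(l, eta); the convention eta'_0 = infinity is encoded by the disjunct k = 1.\<close>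
definition rec_idx :: "nat \<Rightarrow> (nat \<Rightarrow> nat) \<Rightarrow> nat" where
  "rec_idx l e = (THE k. k \<ge> 1 \<and> (k = 1 \<or> e (k - 1) \<ge> l + 1) \<and> l + 1 > e k)"

definition recd :: "nat \<Rightarrow> (nat \<Rightarrow> nat) \<Rightarrow> (nat \<Rightarrow> nat)" where
  "recd l e = (\<lambda>j. if j = 0 then 0
                   else if j < rec_idx l e then e j - 1
                   else if j = rec_idx l e then l
                   else e (j - 1))"

text \<open>Gamma(tau, s, l), for integers l \<ge> - tau'_{j_s}.\<close>
definition Gamma :: "(nat \<Rightarrow> nat) \<Rightarrow> int \<Rightarrow> int \<Rightarrow> (nat \<Rightarrow> nat)" where
  "Gamma c s l = recd (nat (int (c (jidx c s)) + l)) (core c s)"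

end

theory Submission imports Defs begin

lemma young_mono: assumes "young c" "1 \<le> i" "i \<le> j" shows "c j \<le> c i"
  using assms(3,2)
proof (induction j rule: dec_induct)
  case base then show ?case by simp
next
  case (step n) then show ?case using assms(1) unfolding young_def
    by (metis le_trans)
qed

lemma gauss2: "(\<Sum>i\<in>{1..x}. 2 * (int j - int i)) = 2 * int j * int x - int x ^ 2 - int x"
  by (induction x) (auto simp: power2_eq_square algebra_simps)

lemma gauss3: "(\<Sum>j\<in>{1..<d}. 2 * int j) = int d * (int d - 1)"
proof (induction d)
  case 0 then show ?case by simp
next
  case (Suc d) then show ?case
    by (cases "d = 0") (auto simp: sum.atLeastLessThan_Suc algebra_simps)
qed

lemma cells_eq: assumes "\<forall>j>M. c j = 0"
  shows "cells c = (\<lambda>(j,i). (i,j)) ` (SIGMA j:{1..M}. {1..c j})"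
proof -
  have "(i,j) \<in> cells c \<Longrightarrow> j \<le> M" for i j
    using assms unfolding cells_def by (metis (mono_tags) case_prodD le_zero_eq mem_Collect_eq not_le not_one_le_zero)
  then show ?thesis unfolding cells_def by (auto simp: image_def)
qed

lemma size_sum: assumes "\<forall>j>M. c j = 0"
  shows "int (ysize c) = (\<Sum>j\<in>{1..M}. int (c j))"
proof -
  have inj: "inj_on (\<lambda>(j,i). (i,j)) X" for X :: "(nat\<times>nat) set" by (auto simp: inj_on_def)
  have "ysize c = card (SIGMA j:{1..M}. {1..c j})"
    unfolding ysize_def cells_eq[OF assms] by (rule card_image[OF inj])
  also have "\<dots> = (\<Sum>j\<in>{1..M}. c j)" by simp
  finally show ?thesis by simp
qed

lemma content_sum: assumes "\<forall>j>M. c j = 0"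
  shows "2 * content c = (\<Sum>j\<in>{1..M}. 2 * int j * int (c j) - int (c j) ^ 2 - int (c j))"
proof -
  have inj: "inj_on (\<lambda>(j,i). (i,j)) X" for X :: "(nat\<times>nat) set" by (auto simp: inj_on_def)
  have "content c = (\<Sum>(j,i)\<in>(SIGMA j:{1..M}. {1..c j}). int j - int i)"
    unfolding content_def cells_eq[OF assms] by (subst sum.reindex[OF inj]) (simp add: case_prod_unfold)
  also have "\<dots> = (\<Sum>j\<in>{1..M}. \<Sum>i\<in>{1..c j}. int j - int i)"
    by (subst sum.Sigma) auto
  finally have "2 * content c = (\<Sum>j\<in>{1..M}. \<Sum>i\<in>{1..c j}. 2 * (int j - int i))"
    by (simp add: sum_distrib_left)
  then show ?thesis by (simp only: gauss2)
qed

lemma two_fval: "2 * fval c = int (ysize c) ^ 2 - int (ysize c) + 2 * content c"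
proof -
  have "even (int (ysize c) ^ 2 - int (ysize c))"
    by (simp add: power2_eq_square)
  then show ?thesis unfolding fval_def by simp
qed

lemma jidx_props: assumes "young c" "s \<in> Cset c"
  shows "1 \<le> jidx c s \<and> s = int (ysize c) - 1 + int (jidx c s) - int (c (jidx c s))"
proof -
  obtain j where j: "j \<ge> 1" "s = int (ysize c) - 1 + int j - int (c j)"
    using assms(2) unfolding Cset_def by blast
  have lt: "int a - int (c a) < int b - int (c b)" if "1 \<le> a" "a < b" for a b
    using young_mono[OF assms(1) that(1), of b] that by linarith
  have "jidx c s = j" unfolding jidx_def
  proof (rule the_equality)
    show "1 \<le> j \<and> s = int (ysize c) - 1 + int j - int (c j)" using j by simp
  next
    fix j' assume h: "1 \<le> j' \<and> s = int (ysize c) - 1 + int j' - int (c j')"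
    show "j' = j"
    proof (rule ccontr)
      assume "j' \<noteq> j"
      then consider "j' < j" | "j < j'" by linarith
      then show False using lt h j by (cases; fastforce)
    qed
  qed
  then show ?thesis using j by simp
qed

lemma split_at: fixes d M :: nat assumes "1 \<le> d" "d \<le> M"
  shows "(\<Sum>j\<in>{1..M}. g j) = (\<Sum>j\<in>{1..<d}. g j) + g d + (\<Sum>j\<in>{d<..M}. g j)"
proof -
  have e: "{1..M} = {1..<d} \<union> insert d {d<..M}" using assms by auto
  show ?thesis unfolding e by (subst sum.union_disjoint) (auto simp: add.assoc)
qed

lemma split_last: fixes k M :: nat assumes "1 \<le> k" "k \<le> M"
  shows "(\<Sum>j\<in>{1..M}. g j) = (\<Sum>j\<in>{1..<k}. g j) + (\<Sum>j\<in>{k..<M}. g j) + g M"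
proof -
  have e: "{1..M} = {1..<k} \<union> ({k..<M} \<union> {M})" using assms by auto
  show ?thesis unfolding e by (subst sum.union_disjoint, use assms in \<open>auto simp: add_ac sum.union_disjoint\<close>)
qed

lemma core_split: assumes "1 \<le> d" "d \<le> M" "c (Suc M) = 0" "\<forall>j. F 0 j = 0"
  shows "(\<Sum>j\<in>{1..M}. F (if j < d then c j + 1 else c (Suc j)) j)
     = (\<Sum>j\<in>{1..<d}. F (c j + 1) j) + (\<Sum>j\<in>{d<..M}. F (c j) (j - 1))"
proof -
  have e: "{1..M} = {1..<d} \<union> {d..M}" using assms by auto
  have "(\<Sum>j\<in>{1..M}. F (if j < d then c j + 1 else c (Suc j)) j)
     = (\<Sum>j\<in>{1..<d}. F (if j < d then c j + 1 else c (Suc j)) j) + (\<Sum>j\<in>{d..M}. F (if j < d then c j + 1 else c (Suc j)) j)"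
    unfolding e by (rule sum.union_disjoint) auto
  also have "(\<Sum>j\<in>{1..<d}. F (if j < d then c j + 1 else c (Suc j)) j) = (\<Sum>j\<in>{1..<d}. F (c j + 1) j)"
    by (rule sum.cong) auto
  also have "(\<Sum>j\<in>{d..M}. F (if j < d then c j + 1 else c (Suc j)) j) = (\<Sum>j\<in>{d..M}. F (c (Suc j)) j)"
    by (rule sum.cong) auto
  also have "\<dots> = (\<Sum>j\<in>{Suc d..Suc M}. F (c j) (j - 1))"
    by (subst sum.shift_bounds_cl_Suc_ivl) simp
  also have "\<dots> = (\<Sum>j\<in>{Suc d..M}. F (c j) (j - 1))"
    using assms by (simp add: sum.cl_ivl_Suc)
  also have "{Suc d..M} = {d<..M}" by auto
  finally show ?thesis .
qed

lemma recd_split: assumes "1 \<le> k" "k \<le> M"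
  shows "(\<Sum>j\<in>{1..M}. F (if j < k then e j - 1 else if j = k then L else e (j - 1)) j)
     = (\<Sum>j\<in>{1..<k}. F (e j - 1) j) + F L k + (\<Sum>j\<in>{k..<M}. F (e j) (Suc j))"
proof -
  have e: "{1..M} = {1..<k} \<union> insert k {k<..M}" using assms by auto
  have "(\<Sum>j\<in>{1..M}. F (if j < k then e j - 1 else if j = k then L else e (j - 1)) j)
     = (\<Sum>j\<in>{1..<k}. F (if j < k then e j - 1 else if j = k then L else e (j - 1)) j) + F L k
       + (\<Sum>j\<in>{k<..M}. F (if j < k then e j - 1 else if j = k then L else e (j - 1)) j)"
    unfolding e by (subst sum.union_disjoint) (auto simp: add.assoc)
  also have "(\<Sum>j\<in>{1..<k}. F (if j < k then e j - 1 else if j = k then L else e (j - 1)) j) = (\<Sum>j\<in>{1..<k}. F (e j - 1) j)"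
    by (rule sum.cong) auto
  also have "(\<Sum>j\<in>{k<..M}. F (if j < k then e j - 1 else if j = k then L else e (j - 1)) j) = (\<Sum>j\<in>{k<..M}. F (e (j - 1)) j)"
    by (rule sum.cong) auto
  also have "\<dots> = (\<Sum>j\<in>{k..<M}. F (e j) (Suc j))"
  proof -
    have "(\<Sum>j\<in>{k..<M}. F (e j) (Suc j)) = (\<Sum>j\<in>Suc ` {k..<M}. F (e (j - 1)) j)"
      by (subst sum.reindex) auto
    also have "Suc ` {k..<M} = {Suc k..<Suc M}" by (rule image_Suc_atLeastLessThan)
    also have "{Suc k..<Suc M} = {k<..M}" by auto
    finally show ?thesis by simp
  qed
  finally show ?thesis .
qed

lemma rec_props: assumes mono: "\<And>i j. 1 \<le> i \<Longrightarrow> i \<le> j \<Longrightarrow> e j \<le> e i"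
  and zero: "e Z = 0" "1 \<le> Z"
  shows "1 \<le> rec_idx L e \<and> (rec_idx L e = 1 \<or> e (rec_idx L e - 1) \<ge> L+1) \<and> L+1 > e (rec_idx L e)"
proof -
  define k where "k = (LEAST k. 1 \<le> k \<and> e k < L+1)"
  have Pk: "1 \<le> k \<and> e k < L+1" unfolding k_def by (rule LeastI[of _ Z]) (use zero in auto)
  have Q: "k = 1 \<or> e (k - 1) \<ge> L+1"
  proof (cases "k = 1")
    case False
    then have "1 \<le> k - 1" "k - 1 < k" using Pk by auto
    then have "\<not> (1 \<le> k - 1 \<and> e (k-1) < L+1)" unfolding k_def using not_less_Least by blast
    then show ?thesis using \<open>1 \<le> k - 1\<close> by auto
  qed simp
  have "rec_idx L e = k" unfolding rec_idx_def
  proof (rule the_equality)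
    show "1 \<le> k \<and> (k = 1 \<or> L + 1 \<le> e (k - 1)) \<and> e k < L + 1" using Pk Q by auto
  next
    fix k' assume h: "1 \<le> k' \<and> (k' = 1 \<or> L + 1 \<le> e (k' - 1)) \<and> e k' < L + 1"
    show "k' = k"
    proof (rule ccontr)
      assume "k' \<noteq> k"
      then consider "k < k'" | "k' < k" by linarith
      then show False
      proof cases
        case 1
        then have "e (k' - 1) \<le> e k" using mono[of k "k'-1"] Pk by auto
        then show ?thesis using h Pk 1 by auto
      next
        case 2
        then have "e (k - 1) \<le> e k'" using mono[of k' "k-1"] h by auto
        then show ?thesis using h Pk Q 2 by auto
      qed
    qed
  qed
  then show ?thesis using Pk Q by simp
qed

lemma lin_help: "n = A + a + B \<Longrightarrow> cT = P + Fa + Q \<Longrightarrow> m = A + (d - 1) + B \<Longrightarrow> m = A' + B' \<Longrightarrow>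
  cE = P + d*(d-1) - 2*A - 2*(d-1) + Q - 2*B \<Longrightarrow> cE = P' + Q' \<Longrightarrow> cL = P' - k*(k-1) + 2*A' + FL + Q' + 2*B' \<Longrightarrow>
  cL - cT = d*(d-1) - 2*(d-1) - 2*(n-a) - Fa - k*(k-1) + 2*(n+d-1-a) + FL" for n :: int
  by (smt (verit))

theorem mainTheorem10:
  fixes \<tau> :: "nat \<Rightarrow> nat" and s l :: int
  assumes "young \<tau>" and "0 < l" and "s \<in> Cset \<tau>"
  shows "int (ysize (Gamma \<tau> s l)) - int (ysize \<tau>) > 0 \<and>
         real_of_int s = real_of_int (fval (Gamma \<tau> s l) - fval \<tau>)
                          / real_of_int (int (ysize (Gamma \<tau> s l)) - int (ysize \<tau>))"
proof -
  obtain N where N: "\<forall>j>N. \<tau> j = 0" using assms(1) unfolding young_def by blast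
  define d where "d = jidx \<tau> s"
  have d1: "1 \<le> d" and sd: "s = int (ysize \<tau>) - 1 + int d - int (\<tau> d)"
    using jidx_props[OF assms(1,3)] unfolding d_def by auto
  define a where "a = \<tau> d"
  define \<eta> where "\<eta> = core \<tau> s"
  have eta: "\<And>j. j \<ge> 1 \<Longrightarrow> \<eta> j = (if j < d then \<tau> j + 1 else \<tau> (Suc j))"
    unfolding \<eta>_def core_def d_def by simp
  define L where "L = nat (int (\<tau> (jidx \<tau> s)) + l)"
  have L: "L = a + nat l" unfolding L_def a_def d_def using assms(2) by simp
  define M where "M = N + d + 2"
  define k where "k = rec_idx L \<eta>"
  have Gam: "Gamma \<tau> s l = recd L \<eta>" unfolding Gamma_def L_def \<eta>_def ..
  have lam: "\<And>j. j \<ge> 1 \<Longrightarrow> recd L \<eta> j = (if j < k then \<eta> j - 1 else if j = k then L else \<eta> (j - 1))"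
    unfolding recd_def k_def by simp
  have tmono: "\<And>i j. 1 \<le> i \<Longrightarrow> i \<le> j \<Longrightarrow> \<tau> j \<le> \<tau> i" using young_mono[OF assms(1)] by blast
  have emono: "\<eta> j \<le> \<eta> i" if "1 \<le> i" "i \<le> j" for i j
  proof -
    consider "j < d" | "i < d" "d \<le> j" | "d \<le> i" using that by linarith
    then show ?thesis
    proof cases
      case 1 then show ?thesis using that eta tmono by simp
    next
      case 2 then show ?thesis using that eta tmono[of i "Suc j"] by simp
    next
      case 3 then show ?thesis using that eta tmono[of "Suc i" "Suc j"] by simp
    qed
  qed
  have ezero: "\<eta> j = 0" if "j > N + d" for j using that eta N by simp
  have kp: "1 \<le> k \<and> (k = 1 \<or> \<eta> (k - 1) \<ge> L+1) \<and> L+1 > \<eta> k"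
    unfolding k_def by (rule rec_props[where Z = "N+d+1"]) (use emono ezero in auto)
  have kd: "k \<le> d"
  proof (rule ccontr)
    assume "\<not> k \<le> d"
    then have "k \<noteq> 1" "d \<le> k - 1" using d1 by auto
    then have "\<eta> (k - 1) = \<tau> k" using eta[of "k-1"] d1 kp by auto
    moreover have "\<tau> k \<le> a" unfolding a_def using tmono d1 \<open>\<not> k \<le> d\<close> by simp
    ultimately show False using kp \<open>k \<noteq> 1\<close> L by auto
  qed
  have lzero: "\<forall>j>M. recd L \<eta> j = 0" using lam kd ezero unfolding M_def by auto
  have tzero: "\<forall>j>M. \<tau> j = 0" using N unfolding M_def by auto
  have ezero': "\<forall>j>M. \<eta> j = 0" using ezero unfolding M_def by auto
  have dM: "d \<le> M" and kM: "k \<le> M" and tSM: "\<tau> (Suc M) = 0" and eM: "\<eta> M = 0"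
    using kd N ezero unfolding M_def by auto
  have epos: "\<eta> j \<ge> 1" if "1 \<le> j" "j < k" for j using that kd eta by simp
  define F :: "nat \<Rightarrow> nat \<Rightarrow> int" where "F x j = 2 * int j * int x - int x ^ 2 - int x" for x j
  have F0: "\<forall>j. F 0 j = 0" unfolding F_def by simp
  define I :: "nat \<Rightarrow> nat \<Rightarrow> int" where "I x j = int x" for x j
  have I0: "\<forall>j. I 0 j = 0" unfolding I_def by simp
  have etasum: "(\<Sum>j\<in>{1..M}. G (\<eta> j) j) = (\<Sum>j\<in>{1..<d}. G (\<tau> j + 1) j) + (\<Sum>j\<in>{d<..M}. G (\<tau> j) (j - 1))"
    if "\<forall>j. G 0 j = 0" for G :: "nat \<Rightarrow> nat \<Rightarrow> int"
  proof -
    have "(\<Sum>j\<in>{1..M}. G (\<eta> j) j) = (\<Sum>j\<in>{1..M}. G (if j < d then \<tau> j + 1 else \<tau> (Suc j)) j)"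
      by (rule sum.cong) (auto simp: eta)
    also have "\<dots> = (\<Sum>j\<in>{1..<d}. G (\<tau> j + 1) j) + (\<Sum>j\<in>{d<..M}. G (\<tau> j) (j - 1))"
      by (rule core_split[where c=\<tau> and F=G, OF d1 dM tSM that])
    finally show ?thesis .
  qed
  have lamsum: "(\<Sum>j\<in>{1..M}. G (recd L \<eta> j) j) = (\<Sum>j\<in>{1..<k}. G (\<eta> j - 1) j) + G L k + (\<Sum>j\<in>{k..<M}. G (\<eta> j) (Suc j))"
    for G :: "nat \<Rightarrow> nat \<Rightarrow> int"
  proof -
    have "(\<Sum>j\<in>{1..M}. G (recd L \<eta> j) j) = (\<Sum>j\<in>{1..M}. G (if j < k then \<eta> j - 1 else if j = k then L else \<eta> (j - 1)) j)"
      by (rule sum.cong) (auto simp: lam)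
    also have "\<dots> = (\<Sum>j\<in>{1..<k}. G (\<eta> j - 1) j) + G L k + (\<Sum>j\<in>{k..<M}. G (\<eta> j) (Suc j))"
      by (rule recd_split) (use kp kM in auto)
    finally show ?thesis .
  qed
  define A where "A = (\<Sum>j\<in>{1..<d}. int (\<tau> j))"
  define B where "B = (\<Sum>j\<in>{d<..M}. int (\<tau> j))"
  define P where "P = (\<Sum>j\<in>{1..<d}. F (\<tau> j) j)"
  define Q where "Q = (\<Sum>j\<in>{d<..M}. F (\<tau> j) j)"
  define A' where "A' = (\<Sum>j\<in>{1..<k}. int (\<eta> j))"
  define B' where "B' = (\<Sum>j\<in>{k..<M}. int (\<eta> j))"
  define P' where "P' = (\<Sum>j\<in>{1..<k}. F (\<eta> j) j)"
  define Q' where "Q' = (\<Sum>j\<in>{k..<M}. F (\<eta> j) j)"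
  have cd: "card {1..<d} = d - 1" by simp
  have ck: "card {1..<k} = k - 1" by simp
  have n1: "int (ysize \<tau>) = A + int a + B"
    unfolding size_sum[OF tzero] split_at[OF d1 dM] A_def B_def a_def ..
  have c1: "2 * content \<tau> = P + F a d + Q"
    unfolding content_sum[OF tzero] split_at[OF d1 dM] P_def Q_def a_def F_def ..
  have m1: "int (ysize \<eta>) = A + (int d - 1) + B"
  proof -
    have "int (ysize \<eta>) = (\<Sum>j\<in>{1..M}. I (\<eta> j) j)" unfolding size_sum[OF ezero'] I_def ..
    also have "\<dots> = (\<Sum>j\<in>{1..<d}. int (\<tau> j) + 1) + B" using etasum[where G=I, OF I0] by (simp add: I_def B_def add.commute)
    also have "(\<Sum>j\<in>{1..<d}. int (\<tau> j) + 1) = A + (int d - 1)"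
      unfolding A_def sum.distrib using d1 by simp
    finally show ?thesis .
  qed
  have ce1: "2 * content \<eta> = P + int d * (int d - 1) - 2 * A - 2 * (int d - 1) + Q - 2 * B"
  proof -
    have "2 * content \<eta> = (\<Sum>j\<in>{1..M}. F (\<eta> j) j)" unfolding content_sum[OF ezero'] F_def ..
    also have "\<dots> = (\<Sum>j\<in>{1..<d}. F (\<tau> j + 1) j) + (\<Sum>j\<in>{d<..M}. F (\<tau> j) (j - 1))"
      by (rule etasum[where G=F, OF F0])
    also have "(\<Sum>j\<in>{1..<d}. F (\<tau> j + 1) j) = (\<Sum>j\<in>{1..<d}. F (\<tau> j) j + 2 * int j - 2 * int (\<tau> j) - 2)"
      by (rule sum.cong) (auto simp: F_def power2_eq_square algebra_simps)
    also have "\<dots> = P + int d * (int d - 1) - 2 * A - 2 * (int d - 1)"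
      unfolding P_def A_def gauss3[symmetric] sum_subtractf sum.distrib sum_distrib_left using d1 by simp
    also have "(\<Sum>j\<in>{d<..M}. F (\<tau> j) (j - 1)) = (\<Sum>j\<in>{d<..M}. F (\<tau> j) j - 2 * int (\<tau> j))"
      by (rule sum.cong) (use d1 in \<open>auto simp: F_def algebra_simps of_nat_diff\<close>)
    also have "\<dots> = Q - 2 * B" unfolding Q_def B_def sum_subtractf sum_distrib_left ..
    finally show ?thesis by simp
  qed
  have m2: "int (ysize \<eta>) = A' + B'"
    unfolding size_sum[OF ezero'] split_last[OF conjunct1[OF kp] kM] A'_def B'_def using eM by simp
  have ce2: "2 * content \<eta> = P' + Q'"
    unfolding content_sum[OF ezero'] split_last[OF conjunct1[OF kp] kM] P'_def Q'_def F_def using eM by simp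
  have nl: "int (ysize (recd L \<eta>)) = A' - (int k - 1) + int L + B'"
  proof -
    have "int (ysize (recd L \<eta>)) = (\<Sum>j\<in>{1..M}. I (recd L \<eta> j) j)" unfolding size_sum[OF lzero] I_def ..
    also have "\<dots> = (\<Sum>j\<in>{1..<k}. int (\<eta> j - 1)) + int L + B'" using lamsum[of I] by (simp add: I_def B'_def)
    also have "(\<Sum>j\<in>{1..<k}. int (\<eta> j - 1)) = (\<Sum>j\<in>{1..<k}. int (\<eta> j) - 1)"
      by (rule sum.cong) (use epos in \<open>auto simp: of_nat_diff\<close>)
    also have "\<dots> = A' - (int k - 1)" unfolding A'_def sum_subtractf using kp by simp
    finally show ?thesis .
  qed
  have cl: "2 * content (recd L \<eta>) = P' - int k * (int k - 1) + 2 * A' + F L k + Q' + 2 * B'"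
  proof -
    have "2 * content (recd L \<eta>) = (\<Sum>j\<in>{1..M}. F (recd L \<eta> j) j)" unfolding content_sum[OF lzero] F_def ..
    also have "\<dots> = (\<Sum>j\<in>{1..<k}. F (\<eta> j - 1) j) + F L k + (\<Sum>j\<in>{k..<M}. F (\<eta> j) (Suc j))"
      by (rule lamsum)
    also have "(\<Sum>j\<in>{1..<k}. F (\<eta> j - 1) j) = (\<Sum>j\<in>{1..<k}. F (\<eta> j) j - 2 * int j + 2 * int (\<eta> j))"
      by (rule sum.cong) (use epos in \<open>auto simp: F_def of_nat_diff power2_eq_square algebra_simps\<close>)
    also have "\<dots> = P' - int k * (int k - 1) + 2 * A'"
      unfolding P'_def A'_def gauss3[symmetric] sum_subtractf sum.distrib sum_distrib_left by simp
    also have "(\<Sum>j\<in>{k..<M}. F (\<eta> j) (Suc j)) = (\<Sum>j\<in>{k..<M}. F (\<eta> j) j + 2 * int (\<eta> j))"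
      by (rule sum.cong) (auto simp: F_def algebra_simps)
    also have "\<dots> = Q' + 2 * B'" unfolding Q'_def B'_def sum.distrib sum_distrib_left ..
    finally show ?thesis by simp
  qed
  define n where "n = int (ysize \<tau>)"
  define n' where "n' = int (ysize (recd L \<eta>))"
  define D where "D = int d - int k + l"
  have LL: "int L = int a + l" using L assms(2) by simp
  have nD: "n' = n + D" unfolding n'_def n_def D_def using n1 m1 m2 nl LL by linarith
  have Dpos: "D > 0" unfolding D_def using kd assms(2) by linarith
  have cdiff: "2 * content (recd L \<eta>) - 2 * content \<tau>
     = int d * (int d - 1) - 2 * (int d - 1) - 2 * (n - int a) - F a d
       - int k * (int k - 1) + 2 * (n + int d - 1 - int a) + F L k"
    unfolding n_def by (rule lin_help[OF n1 c1 m1 m2 ce1 ce2 cl])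
  have key: "2 * (fval (recd L \<eta>) - fval \<tau>) = 2 * (s * D)"
  proof -
    have "2 * (fval (recd L \<eta>) - fval \<tau>) = n'^2 - n' - n^2 + n + (2 * content (recd L \<eta>) - 2 * content \<tau>)"
      unfolding n_def n'_def using two_fval[of "recd L \<eta>"] two_fval[of \<tau>] by simp
    also have "\<dots> = 2 * (s * D)"
      unfolding cdiff nD sd n_def[symmetric] F_def LL D_def by (simp add: a_def power2_eq_square algebra_simps)
    finally show ?thesis .
  qed
  then have key': "fval (recd L \<eta>) - fval \<tau> = s * D" by simp
  have Deq: "int (ysize (Gamma \<tau> s l)) - int (ysize \<tau>) = D" unfolding Gam using nD n_def n'_def by simp
  show ?thesis unfolding Deq using Dpos unfolding Gam key' by simp
qed

end
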